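(* Let $K\subseteq\mathbb{Z}^{S}$ be an M-convex set on a finite ground-set $S$ and let $m$ be a decreasingly minimal element of $K$. Then every decreasingly minimal element of $K$ can be obtained from $m$ by a sequence of at most $|S|$ elementary steps.
   Context: An M-convex set is the set of integral points of an integral base-polyhedron. An element of $K$ is decreasingly minimal if its largest component is as small as possible, within this its second largest as small as possible, and so on. For a decreasingly minimal $m\in K$, an elementary step replaces $m$ by $m'=m+\chi_s-\chi_t$, where $s,t\in S$, $m'\in K$ and $m(t)=m(s)+1$ ($\chi_v$ the unit vector of $v$); the result is again decreasingly minimal. *)

theory Defs
  imports "HOL-Library.Extended_Real" "HOL-Library.Multiset" "HOL-Library.List_Lexorder"
begin

text \<open>Ground set S is modelled by a finite type 'a; vectors in Z^S are functions 'a => int.\<close>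

definition integral_submodular :: "('a::finite set \<Rightarrow> ereal) \<Rightarrow> bool" where
  "integral_submodular b \<longleftrightarrow>
     b {} = 0 \<and> (\<exists>k::int. b UNIV = ereal (of_int k)) \<and>
     (\<forall>X. b X = \<infinity> \<or> (\<exists>k::int. b X = ereal (of_int k))) \<and>
     (\<forall>X Y. b (X \<inter> Y) + b (X \<union> Y) \<le> b X + b Y)"

definition base_points :: "('a::finite set \<Rightarrow> ereal) \<Rightarrow> ('a \<Rightarrow> int) set" where
  "base_points b = {x. (\<forall>Z. ereal (of_int (sum x Z)) \<le> b Z) \<and>
                        ereal (of_int (sum x UNIV)) = b UNIV}"

definition M_convex :: "('a::finite \<Rightarrow> int) set \<Rightarrow> bool" where
  "M_convex K \<longleftrightarrow> (\<exists>b. integral_submodular b \<and> K = base_points b)"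

definition dec_vec :: "('a::finite \<Rightarrow> int) \<Rightarrow> int list" where
  "dec_vec x = rev (sorted_list_of_multiset (image_mset x (mset_set UNIV)))"

definition dec_min :: "('a::finite \<Rightarrow> int) set \<Rightarrow> ('a \<Rightarrow> int) \<Rightarrow> bool" where
  "dec_min K m \<longleftrightarrow> m \<in> K \<and>
     (\<forall>y\<in>K. (dec_vec y, dec_vec m) \<notin> lexord {(a, b). a < b})"

definition unit_vec :: "'a \<Rightarrow> 'a \<Rightarrow> int" where
  "unit_vec v = (\<lambda>u. if u = v then 1 else 0)"

definition elem_step :: "('a::finite \<Rightarrow> int) set \<Rightarrow> ('a \<Rightarrow> int) \<Rightarrow> ('a \<Rightarrow> int) \<Rightarrow> bool" where
  "elem_step K m m' \<longleftrightarrow> dec_min K m \<and>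
     (\<exists>s t. m' = (\<lambda>u. m u + unit_vec s u - unit_vec t u) \<and> m' \<in> K \<and> m t = m s + 1)"

end

theory Submission
  imports Defs
begin

lemma sorted_split:
  fixes A :: "int multiset"
  shows "sorted_list_of_multiset A = sorted_list_of_multiset (filter_mset (\<lambda>w. w < a) A)
     @ replicate (count A a) a @ sorted_list_of_multiset (filter_mset (\<lambda>w. a < w) A)"
   (is "_ = ?L")
proof -
  have m: "mset ?L = A"
    by (rule multiset_eqI) (auto simp: count_replicate_mset)
  have s: "sorted ?L"
    by (auto simp: sorted_append)
  have "sorted_list_of_multiset (mset ?L) = ?L" using s by (simp only: sorted_list_of_multiset_mset sorted_sort_id)
  then show ?thesis by (simp only: m)
qed

lemma rep_comm: "replicate d a @ replicate n a @ [a] = replicate n a @ a # replicate d a"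
proof -
  have "replicate d a @ replicate n a @ [a] = replicate (d + n + 1) a" by (simp only: replicate_add append_assoc) simp
  also have "\<dots> = replicate (n + (1 + d)) a" by (simp add: ac_simps)
  also have "\<dots> = replicate n a @ a # replicate d a" by (simp only: replicate_add) simp
  finally show ?thesis .
qed

lemma lex_crit:
  fixes A B :: "int multiset"
  assumes h: "filter_mset (\<lambda>w. a < w) A = filter_mset (\<lambda>w. a < w) B"
    and c: "count A a < count B a"
  shows "(rev (sorted_list_of_multiset A), rev (sorted_list_of_multiset B)) \<in> lexord {(x,y). x < y}"
proof -
  define H where "H = rev (sorted_list_of_multiset (filter_mset (\<lambda>w. a < w) A))"
  define LA where "LA = rev (sorted_list_of_multiset (filter_mset (\<lambda>w. w < a) A))"
  define LB where "LB = rev (sorted_list_of_multiset (filter_mset (\<lambda>w. w < a) B))"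
  have rA: "rev (sorted_list_of_multiset A) = H @ replicate (count A a) a @ LA"
    using sorted_split[of A a] unfolding H_def LA_def by (metis append_assoc rev_append rev_replicate)
  have rB: "rev (sorted_list_of_multiset B) = H @ replicate (count A a) a @ a # (replicate (count B a - count A a - 1) a @ LB)"
  proof -
    obtain d where d: "count B a = count A a + Suc d" using c by (metis add_Suc_right less_imp_Suc_add)
    show ?thesis
      using sorted_split[of B a] unfolding H_def LB_def h d by (simp add: replicate_add rep_comm)
  qed
  have LAlt: "\<forall>w\<in>set LA. w < a" by (simp add: LA_def)
  show ?thesis
  proof (cases LA)
    case Nil
    then show ?thesis unfolding rA rB lexord_def by auto
  next
    case (Cons c rest)
    with LAlt have "c < a" by simp
    then show ?thesis unfolding rA rB lexord_def using Cons
      by (auto intro!: exI[of _ "H @ replicate (count A a) a"])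
  qed
qed

lemma isub_vals: "integral_submodular b \<Longrightarrow> b X = \<infinity> \<or> (\<exists>k::int. b X = ereal (of_int k))"
  unfolding integral_submodular_def by blast

lemma isub_sub: "integral_submodular b \<Longrightarrow> b (X \<inter> Y) + b (X \<union> Y) \<le> b X + b Y"
  unfolding integral_submodular_def by blast

lemma bp_le: "x \<in> base_points b \<Longrightarrow> ereal (of_int (sum x Z)) \<le> b Z"
  unfolding base_points_def by blast

lemma bp_univ: "x \<in> base_points b \<Longrightarrow> ereal (of_int (sum x UNIV)) = b UNIV"
  unfolding base_points_def by blast

lemma ereal_arith:
  fixes bU bI bA bB :: ereal and pU pI pA pB :: int
  assumes "bU = \<infinity> \<or> (\<exists>k::int. bU = ereal (of_int k))"
    "bI = \<infinity> \<or> (\<exists>k::int. bI = ereal (of_int k))"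
    "ereal (of_int pU) \<le> bU" "ereal (of_int pI) \<le> bI" "bI + bU \<le> bA + bB"
    "bA = ereal (of_int pA)" "bB = ereal (of_int pB)" "pU + pI = pA + pB"
  shows "ereal (of_int pU) = bU \<and> ereal (of_int pI) = bI"
  using assms by auto

lemma tight_UnInt:
  fixes x :: "'a::finite \<Rightarrow> int"
  assumes b: "integral_submodular b" and x: "x \<in> base_points b"
    and t1: "ereal (of_int (sum x A)) = b A" and t2: "ereal (of_int (sum x B)) = b B"
  shows "ereal (of_int (sum x (A \<union> B))) = b (A \<union> B) \<and> ereal (of_int (sum x (A \<inter> B))) = b (A \<inter> B)"
proof -
  have le1: "ereal (of_int (sum x (A\<union>B))) \<le> b (A\<union>B)" using bp_le[OF x] .
  have le2: "ereal (of_int (sum x (A\<inter>B))) \<le> b (A\<inter>B)" using bp_le[OF x] .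
  have sub: "b (A\<inter>B) + b (A\<union>B) \<le> b A + b B" using isub_sub[OF b] .
  have eq: "sum x (A\<union>B) + sum x (A\<inter>B) = sum x A + sum x B" by (simp add: sum.union_inter)
  show ?thesis
    by (rule ereal_arith[OF isub_vals[OF b] isub_vals[OF b] le1 le2 sub t1[symmetric] t2[symmetric] eq])
qed

lemma ereal_step:
  fixes bz :: ereal and p :: int
  assumes "bz = \<infinity> \<or> (\<exists>k::int. bz = ereal (of_int k))" "ereal (of_int p) \<le> bz" "ereal (of_int p) \<noteq> bz"
  shows "ereal (of_int (p + 1)) \<le> bz"
  using assms by auto

lemma sum_unit: "sum (unit_vec s) (Z::'a::finite set) = (if s \<in> Z then 1 else 0)"
  by (simp add: unit_vec_def)

lemma sum_step: "sum (\<lambda>w. x w + unit_vec s w - unit_vec t w) (Z::'a::finite set)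
   = sum x Z + (if s \<in> Z then 1 else 0) - (if t \<in> Z then 1 else 0)"
  by (simp add: sum.distrib sum_subtractf sum_unit)

lemma step_in:
  fixes x :: "'a::finite \<Rightarrow> int"
  assumes b: "integral_submodular b" and x: "x \<in> base_points b" and st: "s \<noteq> t"
    and H: "\<forall>Z. s \<in> Z \<and> t \<notin> Z \<longrightarrow> ereal (of_int (sum x Z)) \<noteq> b Z"
  shows "(\<lambda>w. x w + unit_vec s w - unit_vec t w) \<in> base_points b"
  unfolding base_points_def
proof (intro CollectI conjI allI)
  fix Z :: "'a set"
  show "ereal (of_int (sum (\<lambda>w. x w + unit_vec s w - unit_vec t w) Z)) \<le> b Z"
  proof (cases "s \<in> Z \<and> t \<notin> Z")
    case True
    then have "ereal (of_int (sum x Z + 1)) \<le> b Z"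
      using ereal_step[OF isub_vals[OF b] bp_le[OF x]] H by blast
    then show ?thesis using True by (simp add: sum_step)
  next
    case False
    have "sum (\<lambda>w. x w + unit_vec s w - unit_vec t w) Z \<le> sum x Z"
      using False by (auto simp: sum_step)
    then have "ereal (of_int (sum (\<lambda>w. x w + unit_vec s w - unit_vec t w) Z)) \<le> ereal (of_int (sum x Z))"
      by (simp only: ereal_less_eq(3) of_int_le_iff)
    also have "\<dots> \<le> b Z" using bp_le[OF x] .
    finally show ?thesis .
  qed
next
  show "ereal (of_int (sum (\<lambda>w. x w + unit_vec s w - unit_vec t w) UNIV)) = b UNIV"
    using bp_univ[OF x] by (simp add: sum_step)
qed

lemma ereal_arith2:
  fixes bU bI bA bB :: ereal and pU pI pA pB :: int
  assumes "bU = \<infinity> \<or> (\<exists>k::int. bU = ereal (of_int k))"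
    "bI = \<infinity> \<or> (\<exists>k::int. bI = ereal (of_int k))"
    "ereal (of_int pU) \<le> bU" "ereal (of_int pI) \<le> bI" "bI + bU \<le> bA + bB"
    "bA = ereal (of_int pA)" "bB = ereal (of_int pB)"
  shows "pI + pU \<le> pA + pB"
  using assms by auto

lemma strong_exch:
  fixes x y :: "'a::finite \<Rightarrow> int"
  assumes b: "integral_submodular b" and x: "x \<in> base_points b" and y: "y \<in> base_points b"
    and xu: "y u < x u"
  shows "\<exists>v. x v < y v \<and> (\<lambda>w. x w + unit_vec v w - unit_vec u w) \<in> base_points b
           \<and> (\<lambda>w. y w + unit_vec u w - unit_vec v w) \<in> base_points b"
proof -
  define Ty where "Ty = {Z. ereal (of_int (sum y Z)) = b Z \<and> u \<in> Z}"
  define Tx where "Tx = {Z. ereal (of_int (sum x Z)) = b Z \<and> u \<notin> Z}"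
  have UTy: "UNIV \<in> Ty" using bp_univ[OF y] by (simp add: Ty_def)
  have ETx: "{} \<in> Tx" using b by (simp add: Tx_def integral_submodular_def zero_ereal_def)
  obtain D where D: "D \<in> Ty" and Dm: "\<forall>W. W \<in> Ty \<longrightarrow> card D \<le> card W"
    using ex_has_least_nat[of "\<lambda>Z. Z \<in> Ty", OF UTy, of card] by blast
  obtain Z where Z: "Z \<in> Tx" and Zm: "\<forall>W. W \<in> Tx \<longrightarrow> card (UNIV::'a set) - card Z \<le> card (UNIV::'a set) - card W"
    using ex_has_least_nat[of "\<lambda>Z. Z \<in> Tx", OF ETx, of "\<lambda>Z. card (UNIV::'a set) - card Z"] by blast
  have Dmin: "D \<subseteq> W" if W: "W \<in> Ty" for W
  proof -
    have "D \<inter> W \<in> Ty" using tight_UnInt[OF b y, of D W] D W by (auto simp: Ty_def)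
    then have "card D \<le> card (D \<inter> W)" using Dm by blast
    then have "D \<inter> W = D" by (meson Int_lower1 card_seteq finite)
    then show ?thesis by blast
  qed
  have Zmax: "W \<subseteq> Z" if W: "W \<in> Tx" for W
  proof -
    have "Z \<union> W \<in> Tx" using tight_UnInt[OF b x, of Z W] Z W by (auto simp: Tx_def)
    then have "card (UNIV::'a set) - card Z \<le> card (UNIV::'a set) - card (Z \<union> W)" using Zm by blast
    moreover have "card (Z \<union> W) \<le> card (UNIV::'a set)" "card Z \<le> card (Z \<union> W)"
      by (auto intro: card_mono)
    ultimately have "card (Z \<union> W) \<le> card Z" by linarith
    then have "Z = Z \<union> W" by (meson Un_upper1 card_seteq finite)
    then show ?thesis by blast
  qed
  have uD: "u \<in> D" and uZ: "u \<notin> Z" using D Z by (auto simp: Ty_def Tx_def)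
  have tD: "ereal (of_int (sum y D)) = b D" and tZ: "ereal (of_int (sum x Z)) = b Z"
    using D Z by (auto simp: Ty_def Tx_def)
  have "\<exists>v\<in>D. x v < y v \<and> v \<notin> Z"
  proof (rule ccontr)
    assume "\<not> ?thesis"
    then have all: "\<forall>v\<in>D - Z. y v \<le> x v" by auto
    have lt: "sum y (D - Z) < sum x (D - Z)"
      by (rule sum_strict_mono_ex1) (use all uD uZ xu in auto)
    have s1: "sum y D = sum y (D \<inter> Z) + sum y (D - Z)" by (simp add: sum.Int_Diff)
    have s2: "sum x (D \<union> Z) + sum x (D \<inter> Z) = sum x D + sum x Z" by (simp add: sum.union_inter)
    have s3: "sum x D = sum x (D \<inter> Z) + sum x (D - Z)" by (simp add: sum.Int_Diff)
    have "sum y (D \<inter> Z) + sum x (D \<union> Z) \<le> sum y D + sum x Z"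
      by (rule ereal_arith2[OF isub_vals[OF b] isub_vals[OF b] bp_le[OF x] bp_le[OF y] isub_sub[OF b] tD[symmetric] tZ[symmetric]])
    with lt s1 s2 s3 show False by linarith
  qed
  then obtain v where vD: "v \<in> D" and xv: "x v < y v" and vZ: "v \<notin> Z" by blast
  have uv: "v \<noteq> u" using xv xu by auto
  have 1: "(\<lambda>w. x w + unit_vec v w - unit_vec u w) \<in> base_points b"
  proof (rule step_in[OF b x uv], intro allI impI)
    fix W assume "v \<in> W \<and> u \<notin> W"
    then show "ereal (of_int (sum x W)) \<noteq> b W" using Zmax[of W] vZ by (auto simp: Tx_def)
  qed
  have 2: "(\<lambda>w. y w + unit_vec u w - unit_vec v w) \<in> base_points b"
  proof (rule step_in[OF b y uv[symmetric]], intro allI impI)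
    fix W assume "u \<in> W \<and> v \<notin> W"
    then show "ereal (of_int (sum y W)) \<noteq> b W" using Dmin[of W] vD by (auto simp: Ty_def)
  qed
  show ?thesis using 1 2 xv by blast
qed

lemma count_img: "count (image_mset f (mset_set (UNIV::'a::finite set))) a = card {z. f z = a}"
  by (simp add: count_image_mset vimage_def)

lemma dec_less:
  fixes f g :: "'a::finite \<Rightarrow> int"
  assumes h: "{z. a < f z} = {z. a < g z}" and e: "\<forall>z. a < g z \<longrightarrow> f z = g z"
    and c: "card {z. f z = a} < card {z. g z = a}"
  shows "(dec_vec f, dec_vec g) \<in> lexord {(x,y). x < y}"
  unfolding dec_vec_def
proof (rule lex_crit)
  have "filter_mset ((<) a) (image_mset f (mset_set UNIV)) = image_mset f (mset_set {z. a < f z})"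
    by (simp add: filter_mset_image_mset)
  also have "\<dots> = image_mset g (mset_set {z. a < g z})"
    unfolding h by (rule image_mset_cong) (use e in auto)
  also have "\<dots> = filter_mset ((<) a) (image_mset g (mset_set UNIV))"
    by (simp add: filter_mset_image_mset)
  finally show "filter_mset ((<) a) (image_mset f (mset_set UNIV)) = filter_mset ((<) a) (image_mset g (mset_set UNIV))" .
  show "count (image_mset f (mset_set UNIV)) a < count (image_mset g (mset_set UNIV)) a"
    using c by (simp only: count_img)
qed

lemma no_improve:
  fixes m :: "'a::finite \<Rightarrow> int"
  assumes dm: "dec_min K m" and st: "m s + 2 \<le> m t"
    and inK: "(\<lambda>w. m w + unit_vec s w - unit_vec t w) \<in> K"
  shows False
proof -
  define x where "x = (\<lambda>w. m w + unit_vec s w - unit_vec t w)"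
  have sne: "s \<noteq> t" using st by auto
  have xs: "x s = m s + 1" and xt: "x t = m t - 1" and xo: "\<And>z. z \<noteq> s \<Longrightarrow> z \<noteq> t \<Longrightarrow> x z = m z"
    using sne by (auto simp: x_def unit_vec_def)
  have h: "{z. m t < x z} = {z. m t < m z}"
  proof (rule Collect_cong)
    fix z show "m t < x z \<longleftrightarrow> m t < m z"
      by (cases "z = s"; cases "z = t") (use xs xt xo st in auto)
  qed
  have e: "\<forall>z. m t < m z \<longrightarrow> x z = m z"
  proof (intro allI impI)
    fix z assume "m t < m z"
    then have "z \<noteq> s" "z \<noteq> t" using st by auto
    then show "x z = m z" by (rule xo)
  qed
  have sub: "{z. x z = m t} = {z. m z = m t} - {t}"
  proof (rule set_eqI)
    fix z show "z \<in> {z. x z = m t} \<longleftrightarrow> z \<in> {z. m z = m t} - {t}"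
      by (cases "z = s"; cases "z = t") (use xs xt xo st in auto)
  qed
  have c: "card {z. x z = m t} < card {z. m z = m t}"
    unfolding sub by (rule card_Diff1_less) auto
  have "(dec_vec x, dec_vec m) \<in> lexord {(x,y). x < y}"
    by (rule dec_less[OF h e c])
  moreover have "x \<in> K" using inK by (simp add: x_def)
  ultimately show False using dm unfolding dec_min_def by blast
qed

lemma dec_vec_bij:
  fixes m :: "'a::finite \<Rightarrow> int"
  assumes "bij \<sigma>"
  shows "dec_vec (m \<circ> \<sigma>) = dec_vec m"
proof -
  have "image_mset (m \<circ> \<sigma>) (mset_set UNIV) = image_mset m (image_mset \<sigma> (mset_set UNIV))"
    by (simp add: multiset.map_comp)
  also have "image_mset \<sigma> (mset_set UNIV) = mset_set (\<sigma> ` UNIV)"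
    using assms by (simp add: image_mset_mset_set bij_is_inj)
  also have "\<sigma> ` UNIV = UNIV" using assms by (simp add: bij_is_surj)
  finally have eq: "image_mset (m \<circ> \<sigma>) (mset_set UNIV) = image_mset m (mset_set UNIV)" .
  show ?thesis unfolding dec_vec_def eq ..
qed

lemma diff_bound:
  fixes m m' :: "'a::finite \<Rightarrow> int"
  assumes b: "integral_submodular b" and K: "K = base_points b"
    and dm: "dec_min K m" and dm': "dec_min K m'"
  shows "m u \<le> m' u + 1"
proof (rule ccontr)
  assume "\<not> ?thesis"
  then have lt: "m' u < m u" by simp
  have mK: "m \<in> base_points b" and mK': "m' \<in> base_points b" using dm dm' K by (auto simp: dec_min_def)
  obtain v where v: "m v < m' v" and i1: "(\<lambda>w. m w + unit_vec v w - unit_vec u w) \<in> base_points b"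
    and i2: "(\<lambda>w. m' w + unit_vec u w - unit_vec v w) \<in> base_points b"
    using strong_exch[OF b mK mK' lt] by blast
  have "\<not> m v + 2 \<le> m u" using no_improve[OF dm, of v u] i1 K by blast
  moreover have "\<not> m' u + 2 \<le> m' v" using no_improve[OF dm', of u v] i2 K by blast
  ultimately show False using v lt \<open>\<not> m u \<le> m' u + 1\<close> by linarith
qed

lemma step_exists:
  fixes m m' :: "'a::finite \<Rightarrow> int"
  assumes b: "integral_submodular b" and K: "K = base_points b"
    and dm: "dec_min K m" and dm': "dec_min K m'" and lt: "m' u < m u"
  shows "\<exists>v. m u = m v + 1 \<and> m' u = m v \<and> m' v = m u
           \<and> (\<lambda>w. m w + unit_vec v w - unit_vec u w) \<in> K"
proof -
  have mK: "m \<in> base_points b" and mK': "m' \<in> base_points b" using dm dm' K by (auto simp: dec_min_def)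
  obtain v where v: "m v < m' v" and i1: "(\<lambda>w. m w + unit_vec v w - unit_vec u w) \<in> base_points b"
    and i2: "(\<lambda>w. m' w + unit_vec u w - unit_vec v w) \<in> base_points b"
    using strong_exch[OF b mK mK' lt] by blast
  have "\<not> m v + 2 \<le> m u" using no_improve[OF dm, of v u] i1 K by blast
  moreover have "\<not> m' u + 2 \<le> m' v" using no_improve[OF dm', of u v] i2 K by blast
  moreover have "m' v \<le> m v + 1" by (rule diff_bound[OF b K dm' dm])
  moreover have "m u \<le> m' u + 1" by (rule diff_bound[OF b K dm dm'])
  ultimately show ?thesis using v lt i1 K by (intro exI[of _ v]) auto
qed

lemma main_ind:
  fixes m' :: "'a::finite \<Rightarrow> int"
  assumes b: "integral_submodular b" and K: "K = base_points b" and dm': "dec_min K m'"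
  shows "\<forall>m. dec_min K m \<longrightarrow> card {w. m w \<noteq> m' w} = n \<longrightarrow> (\<exists>k \<le> n. (elem_step K ^^ k) m m')"
proof (induction n rule: less_induct)
  case (less n)
  show ?case
  proof (intro allI impI)
    fix m assume dm: "dec_min K m" and cn: "card {w. m w \<noteq> m' w} = n"
    show "\<exists>k \<le> n. (elem_step K ^^ k) m m'"
    proof (cases "m = m'")
      case True
      then show ?thesis by (intro exI[of _ 0]) simp
    next
      case False
      have mK: "m \<in> base_points b" and mK': "m' \<in> base_points b" using dm dm' K by (auto simp: dec_min_def)
      have "\<exists>u. m' u < m u"
      proof (rule ccontr)
        assume "\<not> ?thesis"
        then have le: "\<forall>w\<in>UNIV. m w \<le> m' w" by (auto simp: not_less)
        obtain w where "m w \<noteq> m' w" using False by blast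
        with le have "\<exists>w\<in>UNIV. m w < m' w" by (meson UNIV_I order_le_neq_trans)
        then have "sum m UNIV < sum m' UNIV" using le by (intro sum_strict_mono_ex1) auto
        moreover have "ereal (of_int (sum m UNIV)) = ereal (of_int (sum m' UNIV))"
          using bp_univ[OF mK] bp_univ[OF mK'] by simp
        then have "sum m UNIV = sum m' UNIV" by (simp only: ereal.inject of_int_eq_iff)
        ultimately show False by simp
      qed
      then obtain u where lt: "m' u < m u" by blast
      obtain v where v1: "m u = m v + 1" and v2: "m' u = m v" and v3: "m' v = m u"
        and i1: "(\<lambda>w. m w + unit_vec v w - unit_vec u w) \<in> K"
        using step_exists[OF b K dm dm' lt] by blast
      define m1 where "m1 = (\<lambda>w. m w + unit_vec v w - unit_vec u w)"
      have uv: "u \<noteq> v" using v1 by auto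
      define \<sigma> where "\<sigma> = (\<lambda>w. if w = u then v else if w = v then u else w)"
      have ss: "\<sigma> \<circ> \<sigma> = id" by (auto simp: \<sigma>_def)
      have bs: "bij \<sigma>" using ss by (metis bij_betw_def inj_iff o_bij)
      have m1s: "m1 = m \<circ> \<sigma>"
        by (rule ext) (use uv v1 in \<open>auto simp: m1_def \<sigma>_def unit_vec_def\<close>)
      have dm1: "dec_min K m1"
        using dm i1 dec_vec_bij[OF bs, of m] unfolding dec_min_def m1s[symmetric] m1_def[symmetric] by simp
      have st: "elem_step K m m1"
        unfolding elem_step_def m1_def using dm i1 v1 by blast
      have dset: "{w. m1 w \<noteq> m' w} = {w. m w \<noteq> m' w} - {u, v}"
        using uv v1 v2 v3 by (auto simp: m1_def unit_vec_def)
      have uin: "u \<in> {w. m w \<noteq> m' w}" and vin: "v \<in> {w. m w \<noteq> m' w}" using lt v1 v3 by auto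
      have cn1: "card {w. m1 w \<noteq> m' w} = n - 2"
        unfolding dset using uin vin uv cn by (simp add: card_Diff_subset)
      have n2: "n \<ge> 2"
      proof -
        have "card {u, v} \<le> card {w. m w \<noteq> m' w}" using uin vin by (intro card_mono) auto
        then show ?thesis using uv cn by simp
      qed
      obtain k1 where k1: "k1 \<le> n - 2" and r: "(elem_step K ^^ k1) m1 m'"
        using less.IH[of "n - 2"] n2 dm1 cn1 by auto
      have "(elem_step K ^^ Suc k1) m m'" by (rule relpowp_Suc_I2[OF st r])
      then show ?thesis using k1 n2 by (intro exI[of _ "Suc k1"]) auto
    qed
  qed
qed

theorem claim5p3:
  fixes K :: "('a::finite \<Rightarrow> int) set" and m :: "'a \<Rightarrow> int"
  assumes "M_convex K" and "dec_min K m"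
  shows "\<forall>m'. dec_min K m' \<longrightarrow> (\<exists>k \<le> card (UNIV :: 'a set). (elem_step K ^^ k) m m')"
proof (intro allI impI)
  fix m' assume dm': "dec_min K m'"
  obtain b where b: "integral_submodular b" and K: "K = base_points b"
    using assms(1) unfolding M_convex_def by blast
  obtain k where k: "k \<le> card {w. m w \<noteq> m' w}" and r: "(elem_step K ^^ k) m m'"
    using main_ind[OF b K dm'] assms(2) by blast
  have "card {w. m w \<noteq> m' w} \<le> card (UNIV :: 'a set)" by (rule card_mono) auto
  then show "\<exists>k \<le> card (UNIV :: 'a set). (elem_step K ^^ k) m m'" using k r by (intro exI[of _ k]) auto
qed


end
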